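(* Let $U$ be a finite nonempty set, $R$ an equivalence relation on $U$, and $M(R)$ the support matroid induced by $R$. For every $X\subseteq U$, $X$ is a closed set of $M(R)$ if and only if $X$ is a union of some elements of $U/R$ (the set of equivalence classes of $R$).
   Context: For $x\in U$, $RN(x)=\{y\in U\mid xRy\}$; $R^{*}(X)=\{x\in U\mid RN(x)\cap X\neq\emptyset\}$. Let $\mathbf{S}(R)=\{X\subseteq U\mid R^{*}(X)=U\}$. The support matroid $M(R)=(U,\mathbf{I}(R))$ is the matroid on $U$ whose independent sets $\mathbf{I}(R)$ are the subsets of inclusion-minimal members of $\mathbf{S}(R)$. For a matroid $(U,\mathbf{I})$, the rank is $r(X)=\max\{|I|\mid I\subseteq X, I\in\mathbf{I}\}$, the closure is $cl(X)=\{e\in U\mid r(X)=r(X\cup\{e\})\}$, and $X$ is closed if $cl(X)=X$. *)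

theory Defs
  imports Main
begin

definition RN :: "'a set \<Rightarrow> ('a \<times> 'a) set \<Rightarrow> 'a \<Rightarrow> 'a set" where
  "RN U R x = {y \<in> U. (x, y) \<in> R}"

definition upper_approx :: "'a set \<Rightarrow> ('a \<times> 'a) set \<Rightarrow> 'a set \<Rightarrow> 'a set" where
  "upper_approx U R X = {x \<in> U. RN U R x \<inter> X \<noteq> {}}"

definition support_sets :: "'a set \<Rightarrow> ('a \<times> 'a) set \<Rightarrow> 'a set set" where
  "support_sets U R = {X. X \<subseteq> U \<and> upper_approx U R X = U}"

definition supp_indep :: "'a set \<Rightarrow> ('a \<times> 'a) set \<Rightarrow> 'a set set" where
  "supp_indep U R = {I. \<exists>X \<in> support_sets U R.
      (\<forall>Y \<in> support_sets U R. Y \<subseteq> X \<longrightarrow> Y = X) \<and> I \<subseteq> X}"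

definition mrank :: "'a set set \<Rightarrow> 'a set \<Rightarrow> nat" where
  "mrank Ind X = Max {card I | I. I \<subseteq> X \<and> I \<in> Ind}"

definition mclosure :: "'a set \<Rightarrow> 'a set set \<Rightarrow> 'a set \<Rightarrow> 'a set" where
  "mclosure U Ind X = {e \<in> U. mrank Ind X = mrank Ind (X \<union> {e})}"

definition mclosed :: "'a set \<Rightarrow> 'a set set \<Rightarrow> 'a set \<Rightarrow> bool" where
  "mclosed U Ind X \<longleftrightarrow> mclosure U Ind X = X"

end

theory Submission
  imports Defs
begin

definition ppart :: "'a set \<Rightarrow> ('a \<times> 'a) set \<Rightarrow> 'a set \<Rightarrow> bool" where
  "ppart U R I \<longleftrightarrow> I \<subseteq> U \<and> (\<forall>x\<in>I. \<forall>y\<in>I. (x,y)\<in>R \<longrightarrow> x=y)"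

lemma supp_char:
  assumes "equiv U R"
  shows "X \<in> support_sets U R \<longleftrightarrow> X \<subseteq> U \<and> (\<forall>z\<in>U. \<exists>y\<in>X. (z,y)\<in>R)"
  using assms unfolding support_sets_def upper_approx_def RN_def equiv_def refl_on_def
  by blast

lemma indep_ppart:
  assumes eq: "equiv U R" and I: "I \<in> supp_indep U R"
  shows "ppart U R I"
proof -
  obtain X where X: "X \<in> support_sets U R" and min: "\<forall>Y \<in> support_sets U R. Y \<subseteq> X \<longrightarrow> Y = X"
    and IX: "I \<subseteq> X" using I unfolding supp_indep_def by blast
  have XU: "X \<subseteq> U" and cov: "\<forall>z\<in>U. \<exists>y\<in>X. (z,y)\<in>R" using supp_char[OF eq] X by auto
  have "(\<forall>x\<in>I. \<forall>y\<in>I. (x,y)\<in>R \<longrightarrow> x=y)"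
  proof (intro ballI impI, rule ccontr)
    fix x y assume x: "x \<in> I" and y: "y \<in> I" and r: "(x,y)\<in>R" and ne: "x \<noteq> y"
    have "X - {y} \<in> support_sets U R"
      unfolding supp_char[OF eq]
    proof (intro conjI ballI)
      show "X - {y} \<subseteq> U" using XU by blast
      fix z assume z: "z \<in> U"
      then obtain w where w: "w \<in> X" "(z,w)\<in>R" using cov by blast
      show "\<exists>y'\<in>X - {y}. (z, y') \<in> R"
      proof (cases "w = y")
        case True
        have "(y,x)\<in>R" using r eq by (meson equiv_def sym_def)
        hence "(z,x)\<in>R" using w True eq by (meson equiv_def trans_def)
        thus ?thesis using x IX ne by blast
      next
        case False thus ?thesis using w by blast
      qed
    qed
    hence "X - {y} = X" using min by blast
    thus False using y IX by blast
  qed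
  thus ?thesis unfolding ppart_def using IX XU by blast
qed

lemma ppart_indep:
  assumes eq: "equiv U R" and P: "ppart U R I"
  shows "I \<in> supp_indep U R"
proof -
  define rep :: "'a set \<Rightarrow> 'a" where "rep = (\<lambda>C. SOME w. w \<in> C)"
  define T where "T = I \<union> rep ` {C\<in>U//R. C \<inter> I = {}}"
  have IU: "I \<subseteq> U" and Iu: "\<forall>x\<in>I. \<forall>y\<in>I. (x,y)\<in>R \<longrightarrow> x=y" using P unfolding ppart_def by auto
  have repC: "rep C \<in> C" if Cq0: "C \<in> U//R" for C
  proof -
    obtain a where "a \<in> U" "C = R``{a}" using Cq0 unfolding quotient_def by blast
    hence "a \<in> C" using eq unfolding equiv_def refl_on_def by blast
    thus ?thesis unfolding rep_def by (metis someI)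
  qed
  have CU: "C \<subseteq> U" if Cq1: "C \<in> U//R" for C
  proof -
    obtain a where "a \<in> U" "C = R``{a}" using Cq1 unfolding quotient_def by blast
    thus ?thesis using eq unfolding equiv_def refl_on_def by blast
  qed
  have TU: "T \<subseteq> U" unfolding T_def using IU repC CU by blast
  have Tu: "\<forall>x\<in>T. \<forall>y\<in>T. (x,y)\<in>R \<longrightarrow> x=y"
  proof (intro ballI impI)
    fix x y assume x: "x \<in> T" and y: "y \<in> T" and r: "(x,y)\<in>R"
    have gen: "\<And>x y C. (x,y)\<in>R \<Longrightarrow> x \<in> C \<Longrightarrow> C \<in> U//R \<Longrightarrow> y \<in> C"
    proof -
      fix x y C assume r: "(x,y)\<in>R" and xC: "x \<in> C" and C: "C \<in> U//R"
      then obtain a where a: "C = R``{a}" unfolding quotient_def by blast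
      have "(a,x)\<in>R" using a xC by blast
      hence "(a,y)\<in>R" using r eq unfolding equiv_def trans_def by blast
      thus "y \<in> C" using a by blast
    qed
    have gen2: "\<And>x y C. (x,y)\<in>R \<Longrightarrow> y \<in> C \<Longrightarrow> C \<in> U//R \<Longrightarrow> x \<in> C"
      using gen eq unfolding equiv_def sym_def by blast
    show "x = y"
    proof (cases "x \<in> I")
      case xI: True
      show ?thesis
      proof (cases "y \<in> I")
        case True thus ?thesis using Iu xI r by blast
      next
        case False
        then obtain C where C: "C \<in> U//R" "C \<inter> I = {}" "y = rep C" using y T_def by blast
        have "x \<in> C" using gen2[OF r] C repC by blast
        thus ?thesis using C xI by blast
      qed
    next
      case xn: False
      then obtain C where C: "C \<in> U//R" "C \<inter> I = {}" "x = rep C" using x T_def by blast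
      have yC: "y \<in> C" using gen[OF r] C repC by blast
      show ?thesis
      proof (cases "y \<in> I")
        case True thus ?thesis using C yC by blast
      next
        case False
        then obtain D where D: "D \<in> U//R" "D \<inter> I = {}" "y = rep D" using y T_def by blast
        have "y \<in> D" using D repC by blast
        hence "C = D" using yC C D eq quotient_disj by fastforce
        thus ?thesis using C D by simp
      qed
    qed
  qed
  have Ts: "T \<in> support_sets U R"
    unfolding supp_char[OF eq]
  proof (intro conjI ballI)
    show "T \<subseteq> U" by (rule TU)
    fix z assume z: "z \<in> U"
    let ?C = "R``{z}"
    have Cq: "?C \<in> U//R" using z by (rule quotientI)
    show "\<exists>y\<in>T. (z, y) \<in> R"
    proof (cases "?C \<inter> I = {}")
      case True
      hence "rep ?C \<in> T" using Cq T_def by blast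
      moreover have "rep ?C \<in> ?C" using repC Cq by blast
      ultimately show ?thesis by blast
    next
      case False thus ?thesis unfolding T_def by blast
    qed
  qed
  have Tmin: "\<forall>Y \<in> support_sets U R. Y \<subseteq> T \<longrightarrow> Y = T"
  proof (intro ballI impI)
    fix Y assume Y: "Y \<in> support_sets U R" and YT: "Y \<subseteq> T"
    have cov: "\<forall>z\<in>U. \<exists>y\<in>Y. (z,y)\<in>R" using Y supp_char[OF eq] by blast
    show "Y = T"
    proof
      show "T \<subseteq> Y"
      proof
        fix t assume t: "t \<in> T"
        then obtain y where "y \<in> Y" "(t,y)\<in>R" using cov TU by blast
        thus "t \<in> Y" using Tu t YT by blast
      qed
    qed (rule YT)
  qed
  have "I \<subseteq> T" unfolding T_def by blast
  thus ?thesis unfolding supp_indep_def using Ts Tmin by blast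
qed

lemma indep_iff:
  assumes eq: "equiv U R"
  shows "I \<in> supp_indep U R \<longleftrightarrow> ppart U R I"
  using indep_ppart[OF eq] ppart_indep[OF eq] by blast

lemma rank_eq:
  assumes eq: "equiv U R" and XU: "X \<subseteq> U" and fin: "finite X"
  shows "mrank (supp_indep U R) X = card ((\<lambda>x. R``{x}) ` X)"
proof -
  let ?cls = "\<lambda>x. R``{x}"
  let ?n = "card (?cls ` X)"
  let ?S = "{card I | I. I \<subseteq> X \<and> I \<in> supp_indep U R}"
  have clsinj: "inj_on ?cls I" if "ppart U R I" for I
  proof (rule inj_onI)
    fix a b assume a: "a \<in> I" and b: "b \<in> I" and e: "R``{a} = R``{b}"
    have "a \<in> U" "b \<in> U" using a b that unfolding ppart_def by auto
    hence "(a,b)\<in>R" using e eq by (simp add: equiv_class_eq_iff)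
    thus "a = b" using that a b unfolding ppart_def by blast
  qed
  have le: "k \<le> ?n" if kS: "k \<in> ?S" for k
  proof -
    obtain I where I: "k = card I" "I \<subseteq> X" "I \<in> supp_indep U R" using kS by (simp only: mem_Collect_eq) blast
    have "ppart U R I" using I indep_iff[OF eq] by blast
    hence "card I = card (?cls ` I)" using card_image[OF clsinj] by simp
    also have "\<dots> \<le> ?n" using I fin by (intro card_mono) auto
    finally show ?thesis using I by simp
  qed
  define I0 where "I0 = inv_into X ?cls ` (?cls ` X)"
  have I0X: "I0 \<subseteq> X" unfolding I0_def by (auto intro: inv_into_into)
  have fix0: "inv_into X ?cls (?cls a) = a" if aI0: "a \<in> I0" for a
  proof -
    obtain x where x: "x \<in> X" "a = inv_into X ?cls (?cls x)" using aI0 unfolding I0_def by blast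
    have "?cls x \<in> ?cls ` X" using x by blast
    hence "?cls a = ?cls x" using x(2) f_inv_into_f[of "?cls x" ?cls X] by simp
    thus ?thesis using x by simp
  qed
  have pp: "ppart U R I0" unfolding ppart_def
  proof (intro conjI ballI impI)
    show "I0 \<subseteq> U" using I0X XU by blast
    fix a b assume a: "a \<in> I0" and b: "b \<in> I0" and r: "(a,b)\<in>R"
    have "?cls a = ?cls b" using r eq by (simp add: equiv_class_eq)
    thus "a = b" using fix0[OF a] fix0[OF b] by metis
  qed
  have img: "?cls ` I0 = ?cls ` X"
  proof
    show "?cls ` I0 \<subseteq> ?cls ` X" using I0X by (rule image_mono)
    show "?cls ` X \<subseteq> ?cls ` I0"
    proof
      fix C assume C: "C \<in> ?cls ` X"
      have "inv_into X ?cls C \<in> I0" unfolding I0_def using C by (rule imageI)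
      moreover have "?cls (inv_into X ?cls C) = C" using C by (rule f_inv_into_f)
      ultimately show "C \<in> ?cls ` I0" by (metis imageI)
    qed
  qed
  have "card I0 = card (?cls ` I0)" using card_image[OF clsinj[OF pp]] by simp
  hence cI0: "card I0 = ?n" using img by simp
  have "I0 \<in> supp_indep U R" using pp indep_iff[OF eq] by simp
  hence inS: "?n \<in> ?S" using I0X cI0 by (simp only: mem_Collect_eq) metis
  have "?S \<subseteq> {..?n}" using le by auto
  hence finS: "finite ?S" using finite_subset by blast
  show ?thesis unfolding mrank_def
    by (rule Max_eqI[OF finS]) (use le inS in auto)
qed

theorem proposition8:
  fixes U :: "'a set" and R :: "('a \<times> 'a) set" and X :: "'a set"
  assumes "finite U" and "U \<noteq> {}" and "equiv U R" and "X \<subseteq> U"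
  shows "mclosed U (supp_indep U R) X \<longleftrightarrow> (\<exists>F \<subseteq> U // R. X = \<Union>F)"
proof -
  note eq = assms(3)
  let ?cls = "\<lambda>x. R``{x}"
  have finX: "finite X" using assms(1,4) finite_subset by blast
  have RU: "R \<subseteq> U \<times> U" using eq unfolding equiv_def refl_on_def by blast
  have cl: "mclosure U (supp_indep U R) X = R``X"
  proof -
    have "e \<in> mclosure U (supp_indep U R) X \<longleftrightarrow> e \<in> R``X" for e
    proof (cases "e \<in> U")
      case True
      have r1: "mrank (supp_indep U R) X = card (?cls ` X)" by (rule rank_eq[OF eq assms(4) finX])
      have r2: "mrank (supp_indep U R) (X \<union> {e}) = card (insert (?cls e) (?cls ` X))"
        using rank_eq[OF eq _ _, of "X \<union> {e}"] assms(4) True finX by simp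
      have "card (?cls ` X) = card (insert (?cls e) (?cls ` X)) \<longleftrightarrow> ?cls e \<in> ?cls ` X"
        using finX by (auto simp: card_insert_if)
      also have "\<dots> \<longleftrightarrow> e \<in> R``X"
      proof
        assume "?cls e \<in> ?cls ` X"
        then obtain x where x: "x \<in> X" "?cls e = ?cls x" by blast
        hence "(x,e)\<in>R" using eq True assms(4) by (metis equiv_class_eq_iff subsetD)
        thus "e \<in> R``X" using x by blast
      next
        assume "e \<in> R``X"
        then obtain x where x: "x \<in> X" "(x,e)\<in>R" by blast
        hence "?cls e = ?cls x" using eq by (simp add: equiv_class_eq)
        thus "?cls e \<in> ?cls ` X" using x by blast
      qed
      finally show ?thesis unfolding mclosure_def using True r1 r2 by simp
    next
      case False
      thus ?thesis unfolding mclosure_def using RU by blast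
    qed
    thus ?thesis by blast
  qed
  have XRX: "X \<subseteq> R``X" using eq assms(4) unfolding equiv_def refl_on_def by blast
  show ?thesis unfolding mclosed_def cl
  proof
    assume h: "R``X = X"
    show "\<exists>F \<subseteq> U // R. X = \<Union>F"
    proof (intro exI conjI)
      show "?cls ` X \<subseteq> U//R" using assms(4) by (auto intro: quotientI)
      show "X = \<Union>(?cls ` X)" using h by blast
    qed
  next
    assume "\<exists>F \<subseteq> U // R. X = \<Union>F"
    then obtain F where F: "F \<subseteq> U//R" "X = \<Union>F" by blast
    have "R``X \<subseteq> X"
    proof
      fix y assume "y \<in> R``X"
      then obtain x where x: "x \<in> X" "(x,y)\<in>R" by blast
      then obtain C where C: "C \<in> F" "x \<in> C" using F by blast
      then obtain a where a: "C = R``{a}" using F by (auto elim: quotientE)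
      have "(a,y)\<in>R" using a C x eq by (meson Image_singleton_iff equiv_def trans_def)
      thus "y \<in> X" using a C F by blast
    qed
    thus "R``X = X" using XRX by blast
  qed
qed

end
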